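(* Let $p(x)=a_mx^m+\cdots+a_0$ be a polynomial with complex coefficients that is not identically zero, and let $\epsilon>0$. Then the function $f(x)=p(x)e^{-|x|^{1+\epsilon}}$ has linearly independent time-frequency translates, i.e. $\mathcal G(f,\mathbb{R}^2)$ is linearly independent.
   Context: For $a,b\in\mathbb{R}$, $M_aT_bf(x)=e^{2\pi i a x}f(x-b)$, and $\mathcal G(f,\mathbb{R}^2)=\{M_aT_bf:a,b\in\mathbb{R}\}$. Measurable functions equal a.e. are identified; $\mathcal G(f,\mathbb{R}^2)$ is linearly independent if every finite linear combination $\sum c_{(a,b)}M_aT_bf$ over distinct pairs $(a,b)$ with coefficients not all zero is not zero almost everywhere. *)

theory Defs
  imports "HOL-Analysis.Analysis" "HOL-Computational_Algebra.Polynomial"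
begin

definition MT :: "real \<Rightarrow> real \<Rightarrow> (real \<Rightarrow> complex) \<Rightarrow> real \<Rightarrow> complex" where
  "MT a b f x = exp (2 * pi * \<i> * complex_of_real (a * x)) * f (x - b)"

text \<open>Linear independence of G(f,R^2), with functions identified up to
  Lebesgue-a.e. equality: every finite linear combination over distinct pairs
  that vanishes a.e. has all coefficients zero.\<close>
definition gabor_lin_indep :: "(real \<Rightarrow> complex) \<Rightarrow> bool" where
  "gabor_lin_indep f \<longleftrightarrow>
     (\<forall>S :: (real \<times> real) set. \<forall>c :: real \<times> real \<Rightarrow> complex.
        finite S \<longrightarrow>
        (AE x in lborel. (\<Sum>(a,b)\<in>S. c (a,b) * MT a b f x) = 0) \<longrightarrow>
        (\<forall>ab\<in>S. c ab = 0))"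

end

theory Submission imports Defs "HOL-Real_Asymp.Real_Asymp" "HOL-Computational_Algebra.Fundamental_Theorem_Algebra" begin

lemma cexp_add_shift:
  "exp (2 * pi * \<i> * complex_of_real (a * (x + h))) =
   exp (2 * pi * \<i> * complex_of_real (a * x)) * exp (2 * pi * \<i> * complex_of_real (a * h))"
  by (simp add: distrib_left exp_add[symmetric] algebra_simps)

lemma cexp_neq:
  assumes "0 < \<bar>t\<bar>" "\<bar>t\<bar> < 1"
  shows "exp (2 * pi * \<i> * complex_of_real t) \<noteq> 1"
proof
  assume "exp (2 * pi * \<i> * complex_of_real t) = 1"
  then obtain n :: int where n: "2 * pi * t = of_int (2 * n) * pi"
    by (auto simp: exp_eq_1)
  then have tn: "t = of_int n" by simp
  have "real_of_int \<bar>n\<bar> < 1" "0 < real_of_int \<bar>n\<bar>" using assms tn by simp_all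
  then have "\<bar>n\<bar> < 1" "0 < \<bar>n\<bar>" by simp_all
  then show False by linarith
qed

lemma trig_zero:
  assumes "finite A"
  shows "((\<lambda>x. \<Sum>a\<in>A. c a * exp (2 * pi * \<i> * complex_of_real (a * x))) \<longlongrightarrow> 0) at_top
         \<Longrightarrow> \<forall>a\<in>A. c a = 0"
  using assms
proof (induction A arbitrary: c rule: finite_induct)
  case empty
  then show ?case by simp
next
  case (insert a0 A)
  define E where "E = (\<lambda>t::real. exp (2 * pi * \<i> * complex_of_real t))"
  define S where "S = (\<Sum>a\<in>A. \<bar>a - a0\<bar>)"
  define h where "h = 1 / (2 * (1 + S))"
  have sp: "S \<ge> 0" unfolding S_def by (simp add: sum_nonneg)
  have "0 < 2 * (1 + S)" using sp by (smt (verit))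
  then have hpos: "h > 0" by (simp add: h_def)
  have Eneq: "E (a * h) \<noteq> E (a0 * h)" if "a \<in> A" for a
  proof -
    have aa: "a \<noteq> a0" using that insert by auto
    have le: "\<bar>a - a0\<bar> \<le> S"
      unfolding S_def using member_le_sum[of a A "\<lambda>a. \<bar>a - a0\<bar>"] insert that by auto
    have "\<bar>(a - a0) * h\<bar> = \<bar>a - a0\<bar> * h" using hpos by (simp add: abs_mult)
    also have "\<dots> \<le> S * h" using le hpos by (simp add: mult_right_mono)
    also have "\<dots> < 1" using sp by (simp add: h_def field_simps)
    finally have lt: "\<bar>(a - a0) * h\<bar> < 1" .
    have gt: "0 < \<bar>(a - a0) * h\<bar>" using aa hpos by simp
    have "E ((a - a0) * h) \<noteq> 1" unfolding E_def by (rule cexp_neq[OF gt lt])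
    moreover have "E ((a - a0) * h) = E (a * h) / E (a0 * h)"
      by (simp add: E_def left_diff_distrib exp_diff[symmetric] algebra_simps)
    ultimately show ?thesis by (auto simp: E_def)
  qed
  define g where "g = (\<lambda>x. \<Sum>a\<in>insert a0 A. c a * E (a * x))"
  have g0: "(g \<longlongrightarrow> 0) at_top" using insert.prems by (simp add: g_def E_def)
  have sh: "filterlim (\<lambda>x. x + h) at_top at_top"
    by (rule filterlim_tendsto_add_at_top[OF tendsto_const filterlim_ident, of h, simplified add.commute])
  have gh: "((\<lambda>x. g (x + h)) \<longlongrightarrow> 0) at_top"
    using filterlim_compose[OF g0 sh] by simp
  have lim2: "((\<lambda>x. g (x + h) - E (a0 * h) * g x) \<longlongrightarrow> 0) at_top"
    using tendsto_diff[OF gh tendsto_mult[OF tendsto_const g0, of "E (a0*h)"]] by simp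
  have eq: "g (x + h) - E (a0 * h) * g x = (\<Sum>a\<in>A. (c a * (E (a * h) - E (a0 * h))) * E (a * x))" for x
  proof -
    have Eadd: "E (b * (x + h)) = E (b * x) * E (b * h)" for b
      unfolding E_def by (rule cexp_add_shift)
    have "g (x + h) - E (a0 * h) * g x =
        (\<Sum>a\<in>insert a0 A. c a * (E (a * h) - E (a0 * h)) * E (a * x))"
      unfolding g_def Eadd by (simp add: sum_distrib_left sum_subtractf[symmetric] algebra_simps)
    also have "\<dots> = (\<Sum>a\<in>A. c a * (E (a * h) - E (a0 * h)) * E (a * x))"
      using insert by simp
    finally show ?thesis by simp
  qed
  have "\<forall>a\<in>A. c a * (E (a * h) - E (a0 * h)) = 0"
  proof (rule insert.IH)
    have lim3: "((\<lambda>x. \<Sum>a\<in>A. (c a * (E (a * h) - E (a0 * h))) * E (a * x)) \<longlongrightarrow> 0) at_top"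
      using lim2 unfolding eq .
    then show "((\<lambda>x. \<Sum>a\<in>A. c a * (E (a * h) - E (a0 * h)) * exp (2 * pi * \<i> * complex_of_real (a * x))) \<longlongrightarrow> 0) at_top"
      unfolding E_def .
  qed
  then have cA: "\<forall>a\<in>A. c a = 0" using Eneq by auto
  then have "g x = c a0 * E (a0 * x)" for x using insert by (simp add: g_def)
  then have "((\<lambda>x. norm (c a0 * E (a0 * x))) \<longlongrightarrow> 0) at_top"
    using tendsto_norm[OF g0] by simp
  moreover have "norm (c a0 * E (a0 * x)) = norm (c a0)" for x
    by (simp add: E_def norm_mult)
  ultimately have "((\<lambda>x::real. norm (c a0)) \<longlongrightarrow> 0) at_top" by simp
  then have "norm (c a0) = 0" by (simp add: tendsto_const_iff)
  then show ?case using cA by simp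
qed


lemma poly_upper:
  fixes p :: "complex poly"
  shows "\<exists>M n. M \<ge> 0 \<and> (\<forall>z. norm (poly p z) \<le> M * (1 + norm z) ^ n)"
proof (induction p)
  case 0
  then show ?case by (intro exI[of _ 0]) auto
next
  case (pCons a q)
  then obtain M n where M: "M \<ge> 0" "\<And>z. norm (poly q z) \<le> M * (1 + norm z) ^ n" by blast
  have "norm (poly (pCons a q) z) \<le> (norm a + M) * (1 + norm z) ^ Suc n" for z
  proof -
    have one: "1 \<le> (1 + norm z) ^ Suc n" by (rule one_le_power) simp
    have "norm (poly (pCons a q) z) \<le> norm a + norm z * norm (poly q z)"
      by (simp add: norm_triangle_ineq[THEN order_trans] norm_mult)
    also have "\<dots> \<le> norm a + norm z * (M * (1 + norm z) ^ n)"
      using M(2)[of z] by (simp add: mult_left_mono)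
    also have "\<dots> \<le> norm a * (1 + norm z) ^ Suc n + M * (1 + norm z) ^ Suc n"
    proof -
      have "norm a \<le> norm a * (1 + norm z) ^ Suc n" using one
        by (metis mult.right_neutral mult_left_mono norm_ge_zero)
      moreover have "norm z * (M * (1 + norm z) ^ n) \<le> M * (1 + norm z) ^ Suc n"
        using M(1) by (simp add: mult_left_mono mult_right_mono algebra_simps)
      ultimately show ?thesis by linarith
    qed
    finally show ?thesis by (simp add: algebra_simps)
  qed
  then show ?case using M(1) by (intro exI[of _ "norm a + M"] exI[of _ "Suc n"]) auto
qed

lemma poly_lower:
  fixes p :: "complex poly"
  assumes "p \<noteq> 0"
  shows "\<exists>\<delta>>0. \<exists>R. \<forall>z. R \<le> norm z \<longrightarrow> \<delta> \<le> norm (poly p z)"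
proof (cases p)
  case (pCons a q)
  show ?thesis
  proof (cases "q = 0")
    case True
    then have "a \<noteq> 0" using assms pCons by auto
    then show ?thesis using pCons True by (intro exI[of _ "norm a"]) auto
  next
    case False
    from poly_infinity[OF False, of 1 a] show ?thesis using pCons
      by (intro exI[of _ 1]) auto
  qed
qed

lemma powr_gap:
  fixes y d e :: real
  assumes "y \<ge> 0" "d \<ge> 0" "e > 0"
  shows "(y + d) powr (1 + e) \<ge> y powr (1 + e) + d * y powr e"
proof -
  have "(y + d) powr (1 + e) = (y + d) * (y + d) powr e"
    using assms by (simp add: powr_add)
  also have "\<dots> \<ge> (y + d) * y powr e"
    using assms by (intro mult_left_mono powr_mono2) auto
  finally show ?thesis using assms by (simp add: powr_add algebra_simps)
qed


lemma ae_cont_zero: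
  fixes F :: "real \<Rightarrow> complex"
  assumes cont: "continuous_on UNIV F" and ae: "AE x in lborel. F x = 0"
  shows "F x0 = 0"
proof (rule ccontr)
  assume nz: "F x0 \<noteq> 0"
  have op: "open {x. F x \<noteq> 0}"
    by (rule open_Collect_neq[OF cont continuous_on_const])
  have "x0 \<in> {x. F x \<noteq> 0}" using nz by simp
  then obtain e where e: "e > 0" "ball x0 e \<subseteq> {x. F x \<noteq> 0}"
    using op unfolding open_contains_ball by blast
  from ae obtain N where N: "{x \<in> space lborel. \<not> F x = 0} \<subseteq> N" "emeasure lborel N = 0" "N \<in> sets lborel"
    by (rule AE_E)
  have sub: "{x0 - e<..<x0 + e} \<subseteq> N"
    using e(2) N(1) unfolding ball_eq_greaterThanLessThan by auto
  have "emeasure lborel {x0 - e<..<x0 + e} \<le> emeasure lborel N"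
    by (rule emeasure_mono[OF sub N(3)])
  moreover have "emeasure lborel {x0 - e<..<x0 + e} = ennreal (2 * e)"
    using e by simp
  ultimately show False using N(2) e by simp
qed

lemma ratio_bound:
  fixes y d e \<delta> M na nb :: real
  assumes "y \<ge> 0" "d > 0" "e > 0" "\<delta> > 0" "0 \<le> na" "na \<le> M * (1 + y + d) ^ n" "nb \<ge> \<delta>"
  shows "(na * exp (- ((y + d) powr (1 + e)))) / (nb * exp (- (y powr (1 + e))))
         \<le> M / \<delta> * ((1 + y + d) ^ n * exp (- d * y powr e))"
proof -
  define P where "P = (y + d) powr (1 + e)"
  define Q where "Q = y powr (1 + e)"
  define u where "u = exp (- Q)"
  define w where "w = exp (Q - P)"
  have nbpos: "nb > 0" using assms by linarith
  have upos: "u > 0" unfolding u_def by simp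
  have e1: "exp (- P) = u * w" unfolding u_def w_def by (simp flip: exp_add)
  have "(na * exp (- P)) / (nb * exp (- Q)) = (na / nb) * w"
    using nbpos upos unfolding e1 u_def[symmetric] by simp
  also have "\<dots> \<le> (M / \<delta> * (1 + y + d) ^ n) * exp (- d * y powr e)"
  proof (rule mult_mono)
    have "na / nb \<le> M * (1 + y + d) ^ n / \<delta>"
      using assms nbpos by (intro frac_le) simp_all
    then show "na / nb \<le> M / \<delta> * (1 + y + d) ^ n" by simp
    have "P \<ge> Q + d * y powr e" unfolding P_def Q_def
      using powr_gap[of y d e] assms by linarith
    then show "w \<le> exp (- d * y powr e)" unfolding w_def by simp
    have "0 \<le> M * (1 + y + d) ^ n" using assms by linarith
    then show "0 \<le> M / \<delta> * (1 + y + d) ^ n" using assms by simp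
    show "0 \<le> w" unfolding w_def by simp
  qed
  finally show ?thesis unfolding P_def Q_def by (simp only: mult.assoc)
qed


theorem corollary3p6:
  fixes p :: "complex poly" and \<epsilon> :: real
  assumes "p \<noteq> 0" and "\<epsilon> > 0"
  shows "gabor_lin_indep (\<lambda>x. poly p (complex_of_real x) *
                                 complex_of_real (exp (- (\<bar>x\<bar> powr (1 + \<epsilon>)))))"
proof -
  define f where "f = (\<lambda>x::real. poly p (complex_of_real x) *
                                 complex_of_real (exp (- (\<bar>x\<bar> powr (1 + \<epsilon>)))))"
  define E where "E = (\<lambda>t::real. exp (2 * pi * \<i> * complex_of_real t))"
  obtain \<delta> R0 where \<delta>: "\<delta> > 0" and R0: "\<And>z. R0 \<le> norm z \<Longrightarrow> \<delta> \<le> norm (poly p z)"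
    using poly_lower[OF assms(1)] by blast
  obtain M n where M: "M \<ge> 0" "\<And>z. norm (poly p z) \<le> M * (1 + norm z) ^ n"
    using poly_upper by blast
  have MTeq: "MT a b f x = E (a * x) * f (x - b)" for a b x
    by (simp add: MT_def E_def)
  have normE: "norm (E t) = 1" for t
    by (simp add: E_def)
  have normf: "norm (f y) = norm (poly p (complex_of_real y)) * exp (- (y powr (1 + \<epsilon>)))"
    if "y \<ge> 0" for y
    using that by (simp add: f_def norm_mult)
  have fnz: "f y \<noteq> 0" if "y \<ge> R0" "y \<ge> 0" for y
  proof -
    have "\<delta> \<le> norm (poly p (complex_of_real y))" using R0[of "complex_of_real y"] that by simp
    then have "poly p (complex_of_real y) \<noteq> 0" using \<delta> by auto
    then show ?thesis by (simp add: f_def)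
  qed
  have contf: "continuous_on UNIV (\<lambda>x. f (x - b))" for b
  proof -
    have c1: "continuous_on UNIV (\<lambda>x. \<bar>x - b\<bar> powr (1 + \<epsilon>))"
      using assms(2) by (intro continuous_on_powr') (auto intro!: continuous_intros)
    have c2: "continuous_on UNIV (\<lambda>x. complex_of_real (exp (- (\<bar>x - b\<bar> powr (1 + \<epsilon>)))))"
      by (rule continuous_on_of_real[OF continuous_on_exp[OF continuous_on_minus[OF c1]]])
    have c3: "continuous_on UNIV (\<lambda>x. poly p (complex_of_real (x - b)))"
      by (intro continuous_intros)
    have "continuous_on UNIV (\<lambda>x. poly p (complex_of_real (x - b)) *
              complex_of_real (exp (- (\<bar>x - b\<bar> powr (1 + \<epsilon>)))))"
      by (rule continuous_on_mult[OF c3 c2])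
    then show ?thesis by (simp add: f_def)
  qed
  have "gabor_lin_indep f"
    unfolding gabor_lin_indep_def
  proof (intro allI impI ballI)
    fix S :: "(real \<times> real) set" and c :: "real \<times> real \<Rightarrow> complex" and ab
    assume fin: "finite S"
      and ae: "AE x in lborel. (\<Sum>(a,b)\<in>S. c (a,b) * MT a b f x) = 0"
      and abS: "ab \<in> S"
    define G where "G = (\<lambda>x. \<Sum>i\<in>S. c i * (E (fst i * x) * f (x - snd i)))"
    have FG: "(\<Sum>(a,b)\<in>S. c (a,b) * MT a b f x) = G x" for x
      unfolding G_def by (simp add: MTeq split_beta)
    have contG: "continuous_on UNIV G"
      unfolding G_def E_def
      by (intro continuous_on_sum continuous_intros contf)
    have aeG: "AE x in lborel. G x = 0" using ae by (simp add: FG)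
    have G0: "G x = 0" for x by (rule ae_cont_zero[OF contG aeG])
    show "c ab = 0"
    proof (rule ccontr)
      assume nz: "c ab \<noteq> 0"
      define S0 where "S0 = {i\<in>S. c i \<noteq> 0}"
      have finS0: "finite S0" using fin by (simp add: S0_def)
      have S0S: "S0 \<subseteq> S" by (auto simp: S0_def)
      have abS0: "ab \<in> S0" using abS nz by (simp add: S0_def)
      define bm where "bm = Max (snd ` S0)"
      have bm_in: "bm \<in> snd ` S0" unfolding bm_def using finS0 abS0 by (intro Max_in) auto
      have bm_ge: "snd i \<le> bm" if "i \<in> S0" for i
        unfolding bm_def using finS0 that by (intro Max_ge) auto
      define A where "A = {a. (a, bm) \<in> S0}"
      define R where "R = {i\<in>S0. snd i \<noteq> bm}"
      have "A \<subseteq> fst ` S0" by (force simp: A_def image_iff)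
      then have finA: "finite A" using finite_subset finS0 by blast
      have finR: "finite R" using finS0 by (simp add: R_def)
      have R_lt: "snd i < bm" if "i \<in> R" for i
        using bm_ge[of i] that by (auto simp: R_def)
      have RS0: "R \<subseteq> S0" by (auto simp: R_def)
      have S0eq: "S0 = (\<lambda>a. (a, bm)) ` A \<union> R"
        by (auto simp: A_def R_def image_iff)
      have disj: "(\<lambda>a. (a, bm)) ` A \<inter> R = {}"
        by (auto simp: R_def)
      define g where "g = (\<lambda>x. \<Sum>a\<in>A. c (a, bm) * E (a * x))"
      define T where "T = (\<lambda>i x. c i * (E (fst i * x) * f (x - snd i)))"
      have split: "G x = g x * f (x - bm) + (\<Sum>i\<in>R. T i x)" for x
      proof -
        have "G x = (\<Sum>i\<in>S0. T i x)"
          unfolding G_def T_def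
          by (rule sum.mono_neutral_right[OF fin S0S]) (auto simp: S0_def)
        also have "\<dots> = (\<Sum>i\<in>(\<lambda>a. (a, bm)) ` A. T i x) + (\<Sum>i\<in>R. T i x)"
          unfolding S0eq
          by (rule sum.union_disjoint) (use finA finR disj in auto)
        also have "(\<Sum>i\<in>(\<lambda>a. (a, bm)) ` A. T i x) = (\<Sum>a\<in>A. T (a, bm) x)"
          by (rule sum.reindex_cong[of "\<lambda>a. (a, bm)"]) (auto simp: inj_on_def)
        also have "\<dots> = g x * f (x - bm)"
          unfolding g_def T_def by (simp add: sum_distrib_right mult.assoc)
        finally show ?thesis .
      qed
      define X0 where "X0 = bm + max R0 0"
      have geq: "g x = - (\<Sum>i\<in>R. T i x / f (x - bm))" if "x \<ge> X0" for x
      proof -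
        have fx: "f (x - bm) \<noteq> 0" using that by (intro fnz) (auto simp: X0_def)
        have "g x * f (x - bm) = - (\<Sum>i\<in>R. T i x)" using split[of x] G0[of x]
          by (simp add: add_eq_0_iff)
        then have "g x = - (\<Sum>i\<in>R. T i x) / f (x - bm)" using fx
          by (simp add: field_simps)
        then show ?thesis by (simp add: sum_divide_distrib)
      qed
      have terms: "((\<lambda>x. T i x / f (x - bm)) \<longlongrightarrow> 0) at_top" if iR: "i \<in> R" for i
      proof -
        define d where "d = bm - snd i"
        have dpos: "d > 0" using R_lt[OF iR] by (simp add: d_def)
        define K where "K = norm (c i) * (M / \<delta>)"
        have lim: "((\<lambda>x. K * ((1 + (x - bm) + d) ^ n * exp (- d * (x - bm) powr \<epsilon>))) \<longlongrightarrow> 0) at_top"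
        proof -
          have "((\<lambda>x. (1 + (x - bm) + d) ^ n * exp (- d * (x - bm) powr \<epsilon>)) \<longlongrightarrow> 0) at_top"
            using dpos assms(2) by real_asymp
          then show ?thesis by (rule tendsto_mult_right_zero)
        qed
        have ev: "eventually (\<lambda>x. norm (T i x / f (x - bm)) \<le>
                    K * ((1 + (x - bm) + d) ^ n * exp (- d * (x - bm) powr \<epsilon>))) at_top"
          using eventually_ge_at_top[of X0]
        proof eventually_elim
          case (elim x)
          define y where "y = x - bm"
          have y0: "y \<ge> 0" and yR: "y \<ge> R0" using elim by (auto simp: X0_def y_def)
          have xs: "x - snd i = y + d" by (simp add: y_def d_def)
          have yd0: "y + d \<ge> 0" using y0 dpos by simp
          define na where "na = norm (poly p (complex_of_real (y + d)))"
          define nb where "nb = norm (poly p (complex_of_real y))"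
          have na_le: "na \<le> M * (1 + y + d) ^ n"
          proof -
            have nrm: "norm (complex_of_real (y + d)) = y + d" using yd0 by (simp only: norm_of_real abs_of_nonneg)
            show ?thesis using M(2)[of "complex_of_real (y + d)"] unfolding nrm na_def
              by (simp only: add.assoc)
          qed
          have nb_ge: "nb \<ge> \<delta>" using R0[of "complex_of_real y"] y0 yR by (simp add: nb_def)
          have ym: "x - bm = y" by (simp add: y_def)
          have "T i x / f (x - bm) = c i * E (fst i * x) * (f (y + d) / f y)"
            unfolding T_def xs ym by simp
          then have n1: "norm (T i x / f (x - bm)) = norm (c i) * (norm (f (y + d)) / norm (f y))"
            by (simp only: norm_mult norm_divide normE mult_1_right)
          have n2: "norm (f (y + d)) / norm (f y) =
              (na * exp (- ((y + d) powr (1 + \<epsilon>)))) / (nb * exp (- (y powr (1 + \<epsilon>))))"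
            unfolding normf[OF yd0] normf[OF y0] na_def nb_def by (rule refl)
          have n3: "(na * exp (- ((y + d) powr (1 + \<epsilon>)))) / (nb * exp (- (y powr (1 + \<epsilon>))))
                    \<le> M / \<delta> * ((1 + y + d) ^ n * exp (- d * y powr \<epsilon>))"
            by (rule ratio_bound[OF y0 dpos assms(2) \<delta> _ na_le nb_ge]) (simp add: na_def)
          have "norm (T i x / f (x - bm)) \<le> norm (c i) * (M / \<delta> * ((1 + y + d) ^ n * exp (- d * y powr \<epsilon>)))"
            unfolding n1 n2 by (rule mult_left_mono[OF n3 norm_ge_zero])
          then show ?case unfolding ym K_def by (simp only: mult.assoc add.assoc)
        qed
        show ?thesis by (rule Lim_null_comparison[OF ev lim])
      qed
      have "((\<lambda>x. - (\<Sum>i\<in>R. T i x / f (x - bm))) \<longlongrightarrow> 0) at_top"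
        using tendsto_minus[OF tendsto_null_sum[of R "\<lambda>x i. T i x / f (x - bm)", OF terms]] by simp
      moreover have "eventually (\<lambda>x. - (\<Sum>i\<in>R. T i x / f (x - bm)) = g x) at_top"
        using eventually_ge_at_top[of X0] by eventually_elim (simp add: geq)
      ultimately have "(g \<longlongrightarrow> 0) at_top" by (rule Lim_transform_eventually)
      then have cz: "\<forall>a\<in>A. c (a, bm) = 0"
        using trig_zero[OF finA, of "\<lambda>a. c (a, bm)"] unfolding g_def E_def by blast
      from bm_in obtain i where i: "i \<in> S0" "snd i = bm" by auto
      then have "fst i \<in> A" by (auto simp: A_def)
      with cz have "c (fst i, bm) = 0" by blast
      moreover have "c i \<noteq> 0" using i by (simp add: S0_def)
      ultimately show False using i(2) by (metis prod.collapse)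
    qed
  qed
  then show ?thesis unfolding f_def .
qed

end
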